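(* There is a constant $C>0$ such that for every integer $n\ge 1$, every graph on $n$ vertices has at most $C\cdot \rho^n\cdot n$ minimal separators, where $\rho = \frac{1+\sqrt{5}}{2}$ is the golden ratio. That is, $\mathrm{sep}(n) = O(\rho^n\cdot n)$.
   Context: All graphs are finite and simple. For a graph $G=(V,E)$ and two vertices $a,b\in V$, a set $S\subseteq V\setminus\{a,b\}$ is an $(a,b)$-separator if $a$ and $b$ lie in different connected components of $G-S$ (the graph obtained by deleting the vertices of $S$). An $(a,b)$-separator is minimal if no proper subset of it is an $(a,b)$-separator. A set $S\subset V$ is a minimal separator of $G$ if it is a minimal $(a,b)$-separator for some pair of distinct vertices $a,b\in V$. $\mathrm{sep}(n)$ denotes the maximum, over all graphs on $n$ vertices, of the number of minimal separators of the graph. *)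

theory Defs
  imports "HOL-Analysis.Analysis"
begin

definition simple_graph :: "'a set \<Rightarrow> ('a \<Rightarrow> 'a \<Rightarrow> bool) \<Rightarrow> bool" where
  "simple_graph V E \<longleftrightarrow> finite V \<and> (\<forall>x y. E x y \<longrightarrow> x \<in> V \<and> y \<in> V)
     \<and> (\<forall>x y. E x y \<longrightarrow> E y x) \<and> (\<forall>x. \<not> E x x)"

definition connected_in_minus :: "'a set \<Rightarrow> ('a \<Rightarrow> 'a \<Rightarrow> bool) \<Rightarrow> 'a set \<Rightarrow> 'a \<Rightarrow> 'a \<Rightarrow> bool" where
  "connected_in_minus V E S x y \<longleftrightarrow> x \<in> V - S \<and> y \<in> V - S \<and>
     (\<lambda>u v. E u v \<and> u \<in> V - S \<and> v \<in> V - S)\<^sup>*\<^sup>* x y"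

definition is_separator :: "'a set \<Rightarrow> ('a \<Rightarrow> 'a \<Rightarrow> bool) \<Rightarrow> 'a \<Rightarrow> 'a \<Rightarrow> 'a set \<Rightarrow> bool" where
  "is_separator V E a b S \<longleftrightarrow> S \<subseteq> V - {a, b} \<and> \<not> connected_in_minus V E S a b"

definition is_minimal_separator :: "'a set \<Rightarrow> ('a \<Rightarrow> 'a \<Rightarrow> bool) \<Rightarrow> 'a \<Rightarrow> 'a \<Rightarrow> 'a set \<Rightarrow> bool" where
  "is_minimal_separator V E a b S \<longleftrightarrow> is_separator V E a b S \<and>
     (\<forall>T. T \<subset> S \<longrightarrow> \<not> is_separator V E a b T)"

definition minimal_separators :: "'a set \<Rightarrow> ('a \<Rightarrow> 'a \<Rightarrow> bool) \<Rightarrow> 'a set set" where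
  "minimal_separators V E = {S. \<exists>a\<in>V. \<exists>b\<in>V. a \<noteq> b \<and> is_minimal_separator V E a b S}"

definition golden_ratio :: real where
  "golden_ratio = (1 + sqrt 5) / 2"

end

theory Submission
  imports Defs
begin

definition nb :: "'a set \<Rightarrow> ('a \<Rightarrow> 'a \<Rightarrow> bool) \<Rightarrow> 'a set \<Rightarrow> 'a set" where
  "nb V E D = {x\<in>V. x \<notin> D \<and> (\<exists>y\<in>D. E y x)}"

definition conn :: "('a \<Rightarrow> 'a \<Rightarrow> bool) \<Rightarrow> 'a set \<Rightarrow> 'a set \<Rightarrow> bool" where
  "conn E C D \<longleftrightarrow> (\<forall>Y. C \<subseteq> Y \<and> Y \<subset> D \<longrightarrow> (\<exists>y\<in>Y. \<exists>z\<in>D-Y. E y z))"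

definition fam :: "'a set \<Rightarrow> ('a \<Rightarrow> 'a \<Rightarrow> bool) \<Rightarrow> 'a set \<Rightarrow> 'a set \<Rightarrow> nat \<Rightarrow> 'a set set" where
  "fam V E C X m = {D. C \<subseteq> D \<and> D \<subseteq> V \<and> D \<inter> X = {} \<and> conn E C D \<and>
      2 * card (D - C) + card (nb V E D - X) \<le> m}"

lemma gr_ge1: "golden_ratio \<ge> 1"
  unfolding golden_ratio_def
  using real_sqrt_ge_one[of 5] by simp

lemma gr_sq: "golden_ratio ^ 2 = golden_ratio + 1"
  unfolding golden_ratio_def by (simp add: power2_eq_square field_simps)

lemma fam_finite: "finite V \<Longrightarrow> finite (fam V E C X m)"
  by (rule finite_subset[of _ "Pow V"]) (auto simp: fam_def)

lemma fam_bound: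
  assumes "finite V" "C \<subseteq> V"
  shows "real (card (fam V E C X m)) \<le> golden_ratio ^ m"
  using assms(2)
proof (induction "card (V - C - X)" arbitrary: C X m rule: less_induct)
  case less
  show ?case
  proof (cases "\<exists>u. u \<in> nb V E C - X")
    case False
    have "fam V E C X m \<subseteq> {C}"
    proof
      fix D assume D: "D \<in> fam V E C X m"
      have "D = C"
      proof (rule ccontr)
        assume "D \<noteq> C"
        with D have "C \<subseteq> C \<and> C \<subset> D" by (auto simp: fam_def)
        moreover have "conn E C D" using D by (simp add: fam_def)
        ultimately obtain y z where "y \<in> C" "z \<in> D - C" "E y z" unfolding conn_def by blast
        moreover have "z \<in> V" using D \<open>z \<in> D - C\<close> by (auto simp: fam_def)
        ultimately have "z \<in> nb V E C" by (auto simp: nb_def)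
        with False have "z \<in> X" by auto
        with D \<open>z \<in> D - C\<close> show False by (auto simp: fam_def)
      qed
      then show "D \<in> {C}" by simp
    qed
    then have "card (fam V E C X m) \<le> card {C}"
      by (rule card_mono[rotated]) simp
    then have "card (fam V E C X m) \<le> 1" by simp
    then have "real (card (fam V E C X m)) \<le> 1" by simp
    also have "1 \<le> golden_ratio ^ m" using gr_ge1 by simp
    finally show ?thesis .
  next
    case True
    then obtain u where u: "u \<in> nb V E C" "u \<notin> X" by auto
    have uV: "u \<in> V" and uC: "u \<notin> C" using u by (auto simp: nb_def)
    define A where "A = {D \<in> fam V E C X m. u \<in> D}"
    define B where "B = {D \<in> fam V E C X m. u \<notin> D}"
    have AB: "fam V E C X m = A \<union> B" by (auto simp: A_def B_def)
    have lt1: "card (V - insert u C - X) < card (V - C - X)"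
      by (rule psubset_card_mono) (use \<open>finite V\<close> uV uC u in auto)
    have lt2: "card (V - C - insert u X) < card (V - C - X)"
      by (rule psubset_card_mono) (use \<open>finite V\<close> uV uC u in auto)
    have cA: "real (card A) \<le> (if m \<ge> 2 then golden_ratio ^ (m - 2) else 0)"
    proof -
      have sub: "A \<subseteq> fam V E (insert u C) X (m - 2)" and m2: "A \<noteq> {} \<Longrightarrow> m \<ge> 2"
      proof -
        {
          fix D assume D: "D \<in> A"
          then have uD: "u \<in> D" and Df: "D \<in> fam V E C X m" by (auto simp: A_def)
          have fD: "finite D" using Df \<open>finite V\<close> finite_subset by (auto simp: fam_def)
          have eq: "D - C = insert u (D - insert u C)" using uD uC by auto
          have "card (D - C) = card (insert u (D - insert u C))"
            by (simp only: eq)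
          also have "\<dots> = Suc (card (D - insert u C))"
            by (rule card_insert_disjoint) (use fD in auto)
          finally have cc: "card (D - C) = Suc (card (D - insert u C))" .
          have cn: "conn E C D" using Df by (simp add: fam_def)
          have cn2: "conn E (insert u C) D" unfolding conn_def
          proof (intro allI impI)
            fix Y assume "insert u C \<subseteq> Y \<and> Y \<subset> D"
            then have "C \<subseteq> Y \<and> Y \<subset> D" by blast
            with cn show "\<exists>y\<in>Y. \<exists>z\<in>D - Y. E y z" unfolding conn_def by blast
          qed
          have "2 * card (D - C) + card (nb V E D - X) \<le> m" using Df by (simp add: fam_def)
          with cc have "2 * card (D - insert u C) + card (nb V E D - X) \<le> m - 2 \<and> m \<ge> 2" by simp
          with Df cn2 uD have "D \<in> fam V E (insert u C) X (m - 2) \<and> m \<ge> 2"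
            unfolding fam_def by blast
        }
        then show "A \<subseteq> fam V E (insert u C) X (m - 2)" "A \<noteq> {} \<Longrightarrow> m \<ge> 2" by auto
      qed
      show ?thesis
      proof (cases "A = {}")
        case True then show ?thesis using gr_ge1 by simp
      next
        case False
        have "real (card A) \<le> real (card (fam V E (insert u C) X (m - 2)))"
          using card_mono[OF fam_finite[OF \<open>finite V\<close>] sub] by simp
        also have "\<dots> \<le> golden_ratio ^ (m - 2)"
          using less(1)[OF lt1] less(2) uV by auto
        finally show ?thesis using m2[OF False] by simp
      qed
    qed
    have cB: "real (card B) \<le> (if m \<ge> 1 then golden_ratio ^ (m - 1) else 0)"
    proof -
      have sub: "B \<subseteq> fam V E C (insert u X) (m - 1)" and m1: "B \<noteq> {} \<Longrightarrow> m \<ge> 1"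
      proof -
        {
          fix D assume D: "D \<in> B"
          then have uD: "u \<notin> D" and Df: "D \<in> fam V E C X m" by (auto simp: B_def)
          have un: "u \<in> nb V E D" using u uD Df by (auto simp: nb_def fam_def)
          have fN: "finite (nb V E D)" using \<open>finite V\<close> by (auto simp: nb_def)
          have eq: "nb V E D - X = insert u (nb V E D - insert u X)" using un u by auto
          have "card (nb V E D - X) = card (insert u (nb V E D - insert u X))"
            by (simp only: eq)
          also have "\<dots> = Suc (card (nb V E D - insert u X))"
            by (rule card_insert_disjoint) (use fN in auto)
          finally have cc: "card (nb V E D - X) = Suc (card (nb V E D - insert u X))" .
          have "2 * card (D - C) + card (nb V E D - X) \<le> m" using Df by (simp add: fam_def)
          with cc have "2 * card (D - C) + card (nb V E D - insert u X) \<le> m - 1 \<and> m \<ge> 1" by simp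
          with Df uD have "D \<in> fam V E C (insert u X) (m - 1) \<and> m \<ge> 1"
            unfolding fam_def by blast
        }
        then show "B \<subseteq> fam V E C (insert u X) (m - 1)" "B \<noteq> {} \<Longrightarrow> m \<ge> 1" by auto
      qed
      show ?thesis
      proof (cases "B = {}")
        case True then show ?thesis using gr_ge1 by simp
      next
        case False
        have "real (card B) \<le> real (card (fam V E C (insert u X) (m - 1)))"
          using card_mono[OF fam_finite[OF \<open>finite V\<close>] sub] by simp
        also have "\<dots> \<le> golden_ratio ^ (m - 1)"
          using less(1)[OF lt2] less(2) by auto
        finally show ?thesis using m1[OF False] by simp
      qed
    qed
    have "real (card (fam V E C X m)) \<le> real (card A) + real (card B)"
      unfolding AB using card_Un_le[of A B] by linarith
    also have "\<dots> \<le> golden_ratio ^ m"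
    proof (cases "m \<ge> 2")
      case True
      then obtain k where k: "m = k + 2" by (metis add.commute le_add_diff_inverse)
      have "golden_ratio ^ m = golden_ratio ^ k * golden_ratio ^ 2" by (simp only: k power_add)
      also have "\<dots> = golden_ratio ^ k + golden_ratio ^ (k+1)" by (simp only: gr_sq power_add power_one_right algebra_simps)
      finally show ?thesis using cA cB k True by simp
    next
      case False
      show ?thesis
      proof (cases "m = 1")
        case True then show ?thesis using cA cB gr_ge1 by simp
      next
        case False
        with \<open>\<not> m \<ge> 2\<close> have "m = 0" by simp
        then show ?thesis using cA cB by simp
      qed
    qed
    finally show ?thesis .
  qed
qed


definition comp :: "'a set \<Rightarrow> ('a \<Rightarrow> 'a \<Rightarrow> bool) \<Rightarrow> 'a set \<Rightarrow> 'a \<Rightarrow> 'a set" where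
  "comp V E S r = {x. connected_in_minus V E S r x}"

lemma comp_sub: "comp V E S r \<subseteq> V - S"
  by (auto simp: comp_def connected_in_minus_def)

lemma cim_sym:
  assumes sg: "simple_graph V E" and c: "connected_in_minus V E T x y"
  shows "connected_in_minus V E T y x"
proof -
  let ?R = "\<lambda>u v. E u v \<and> u \<in> V - T \<and> v \<in> V - T"
  have "?R\<^sup>*\<^sup>* x y" using c by (simp add: connected_in_minus_def)
  then have "?R\<^sup>*\<^sup>* y x"
  proof (induction rule: rtranclp_induct)
    case base then show ?case by simp
  next
    case (step y z)
    then have "?R z y" using sg by (auto simp: simple_graph_def)
    then show ?case using step(3) converse_rtranclp_into_rtranclp[of ?R z y x] by blast
  qed
  then show ?thesis using c by (simp add: connected_in_minus_def)
qed

lemma cim_trans: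
  "connected_in_minus V E T x y \<Longrightarrow> connected_in_minus V E T y z \<Longrightarrow> connected_in_minus V E T x z"
  unfolding connected_in_minus_def by (meson rtranclp_trans)

lemma comp_nb_sub: "nb V E (comp V E S r) \<subseteq> S"
proof
  fix x assume x: "x \<in> nb V E (comp V E S r)"
  then obtain y where y: "y \<in> comp V E S r" "E y x" "x \<in> V" "x \<notin> comp V E S r"
    by (auto simp: nb_def)
  show "x \<in> S"
  proof (rule ccontr)
    assume "x \<notin> S"
    have "connected_in_minus V E S y x"
      using y \<open>x \<notin> S\<close> comp_sub[of V E S r]
      unfolding connected_in_minus_def by (auto intro: r_into_rtranclp)
    then have "x \<in> comp V E S r" using y(1) cim_trans by (force simp: comp_def)
    with y show False by simp
  qed
qed

lemma comp_conn:
  assumes r: "r \<in> V - S"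
  shows "conn E {r} (comp V E S r)"
  unfolding conn_def
proof (intro allI impI)
  fix Y assume Y: "{r} \<subseteq> Y \<and> Y \<subset> comp V E S r"
  then obtain w where w: "w \<in> comp V E S r" "w \<notin> Y" by auto
  let ?R = "\<lambda>u v. E u v \<and> u \<in> V - S \<and> v \<in> V - S"
  have "?R\<^sup>*\<^sup>* r w" using w by (simp add: comp_def connected_in_minus_def)
  then have "w \<in> Y \<or> (\<exists>y\<in>Y. \<exists>z\<in>comp V E S r - Y. E y z)"
  proof (induction rule: rtranclp_induct)
    case base then show ?case using Y by auto
  next
    case (step y z)
    have "z \<in> comp V E S r" using step(1,2) r
      by (auto simp: comp_def connected_in_minus_def intro: rtranclp.rtrancl_into_rtrancl)
    then show ?case using step(2,3) by blast
  qed
  then show "\<exists>y\<in>Y. \<exists>z\<in>comp V E S r - Y. E y z" using w by auto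
qed

lemma S_sub_nb:
  assumes r: "r \<in> V - S" and s: "s \<in> S" "s \<in> V"
    and ct: "connected_in_minus V E (S - {s}) r t"
    and nct: "\<not> connected_in_minus V E S r t"
  shows "s \<in> nb V E (comp V E S r)"
proof -
  let ?R = "\<lambda>u v. E u v \<and> u \<in> V - (S - {s}) \<and> v \<in> V - (S - {s})"
  have "?R\<^sup>*\<^sup>* r t" using ct by (simp add: connected_in_minus_def)
  then have "t \<in> comp V E S r \<or> s \<in> nb V E (comp V E S r)"
  proof (induction rule: rtranclp_induct)
    case base then show ?case using r by (auto simp: comp_def connected_in_minus_def)
  next
    case (step y z)
    show ?case
    proof (cases "s \<in> nb V E (comp V E S r)")
      case True then show ?thesis by simp
    next
      case False
      with step(3) have yc: "y \<in> comp V E S r" by simp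
      show ?thesis
      proof (cases "z = s")
        case True
        then have "s \<in> nb V E (comp V E S r)"
          using yc step(2) s comp_sub[of V E S r] by (auto simp: nb_def)
        then show ?thesis by simp
      next
        case False
        then have zz: "z \<in> V - S" using step(2) by auto
        have "connected_in_minus V E S y z"
          using yc zz step(2) comp_sub[of V E S r]
          unfolding connected_in_minus_def by (auto intro: r_into_rtranclp)
        then have "z \<in> comp V E S r" using yc cim_trans by (force simp: comp_def)
        then show ?thesis by simp
      qed
    qed
  qed
  with nct show ?thesis by (auto simp: comp_def)
qed

lemma sep_cover:
  assumes sg: "simple_graph V E" and S: "S \<in> minimal_separators V E"
  shows "\<exists>v\<in>V. S \<in> nb V E ` fam V E {v} {} (card V - 2)"
proof -
  from S obtain a b where ab: "a \<in> V" "b \<in> V" "a \<noteq> b" and ms: "is_minimal_separator V E a b S"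
    by (auto simp: minimal_separators_def)
  have SV: "S \<subseteq> V - {a, b}" and nab: "\<not> connected_in_minus V E S a b"
    and mn: "\<And>T. T \<subset> S \<Longrightarrow> \<not> is_separator V E a b T"
    using ms by (auto simp: is_minimal_separator_def is_separator_def)
  have aS: "a \<in> V - S" and bS: "b \<in> V - S" using SV ab by auto
  have fV: "finite V" using sg by (simp add: simple_graph_def)
  have cS: "\<And>s. s \<in> S \<Longrightarrow> connected_in_minus V E (S - {s}) a b"
  proof -
    fix s assume "s \<in> S"
    then have "S - {s} \<subset> S" by auto
    from mn[OF this] show "connected_in_minus V E (S - {s}) a b"
      using SV by (auto simp: is_separator_def)
  qed
  have nbA: "nb V E (comp V E S a) = S"
  proof
    show "nb V E (comp V E S a) \<subseteq> S" by (rule comp_nb_sub)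
    show "S \<subseteq> nb V E (comp V E S a)"
      using S_sub_nb[OF aS _ _ cS nab] SV by blast
  qed
  have nbB: "nb V E (comp V E S b) = S"
  proof
    show "nb V E (comp V E S b) \<subseteq> S" by (rule comp_nb_sub)
    have nba: "\<not> connected_in_minus V E S b a" using nab cim_sym[OF sg, of S b a] by blast
    show "S \<subseteq> nb V E (comp V E S b)"
      using S_sub_nb[OF bS _ _ cim_sym[OF sg cS] nba] SV by blast
  qed
  have disj: "comp V E S a \<inter> comp V E S b = {}"
  proof (rule ccontr)
    assume "comp V E S a \<inter> comp V E S b \<noteq> {}"
    then obtain x where x1: "connected_in_minus V E S a x" and x2: "connected_in_minus V E S b x"
      by (auto simp: comp_def)
    have "connected_in_minus V E S a b" using cim_trans[OF x1 cim_sym[OF sg x2]] .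
    with nab show False by simp
  qed
  have sub: "comp V E S a \<union> comp V E S b \<union> S \<subseteq> V"
    using comp_sub[of V E S a] comp_sub[of V E S b] SV by auto
  have fin: "finite (comp V E S a)" "finite (comp V E S b)" "finite S"
    using sub fV finite_subset by blast+
  have "card (comp V E S a \<union> comp V E S b \<union> S) = card (comp V E S a) + card (comp V E S b) + card S"
  proof -
    have d2: "(comp V E S a \<union> comp V E S b) \<inter> S = {}"
      using comp_sub[of V E S a] comp_sub[of V E S b] by blast
    have "card (comp V E S a \<union> comp V E S b \<union> S) = card (comp V E S a \<union> comp V E S b) + card S"
      by (rule card_Un_disjoint) (use fin d2 in auto)
    also have "card (comp V E S a \<union> comp V E S b) = card (comp V E S a) + card (comp V E S b)"
      by (rule card_Un_disjoint) (use fin disj in auto)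
    finally show ?thesis .
  qed
  moreover have "card (comp V E S a \<union> comp V E S b \<union> S) \<le> card V"
    using card_mono[OF fV sub] .
  ultimately have tot: "card (comp V E S a) + card (comp V E S b) + card S \<le> card V" by simp
  have key: "\<And>r. r \<in> V - S \<Longrightarrow> nb V E (comp V E S r) = S \<Longrightarrow>
      2 * card (comp V E S r) + card S \<le> card V \<Longrightarrow> S \<in> nb V E ` fam V E {r} {} (card V - 2)"
  proof -
    fix r assume r: "r \<in> V - S" and nbr: "nb V E (comp V E S r) = S"
      and c: "2 * card (comp V E S r) + card S \<le> card V"
    have rc: "r \<in> comp V E S r" using r by (auto simp: comp_def connected_in_minus_def)
    have fc: "finite (comp V E S r)" using comp_sub[of V E S r] fV finite_subset by blast
    have "card (comp V E S r - {r}) = card (comp V E S r) - 1" using rc fc by simp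
    moreover have "card (comp V E S r) \<ge> 1" using rc fc by (metis One_nat_def Suc_leI card_gt_0_iff empty_iff)
    ultimately have "2 * card (comp V E S r - {r}) + card (nb V E (comp V E S r) - {}) \<le> card V - 2"
      using c nbr by simp
    then have "comp V E S r \<in> fam V E {r} {} (card V - 2)"
      using rc comp_sub[of V E S r] comp_conn[OF r] by (auto simp: fam_def)
    then show "S \<in> nb V E ` fam V E {r} {} (card V - 2)" using nbr by force
  qed
  show ?thesis
  proof (cases "card (comp V E S a) \<le> card (comp V E S b)")
    case True
    then show ?thesis using key[OF aS nbA] tot ab by auto
  next
    case False
    then show ?thesis using key[OF bS nbB] tot ab by auto
  qed
qed

theorem theorem1:
  shows "\<exists>C::real. C > 0 \<and> (\<forall>n::nat. \<forall>E :: nat \<Rightarrow> nat \<Rightarrow> bool.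
     n \<ge> 1 \<longrightarrow> simple_graph {..<n} E \<longrightarrow>
     real (card (minimal_separators {..<n} E)) \<le> C * golden_ratio ^ n * real n)"
proof (intro exI[of _ 1] conjI allI impI)
  fix n :: nat and E :: "nat \<Rightarrow> nat \<Rightarrow> bool"
  assume n: "n \<ge> 1" and sg: "simple_graph {..<n} E"
  let ?V = "{..<n::nat}"
  have "minimal_separators ?V E \<subseteq> (\<Union>v\<in>?V. nb ?V E ` fam ?V E {v} {} (card ?V - 2))"
    using sep_cover[OF sg] by blast
  then have "card (minimal_separators ?V E) \<le> card (\<Union>v\<in>?V. nb ?V E ` fam ?V E {v} {} (card ?V - 2))"
    by (intro card_mono) (auto intro: fam_finite)
  also have "\<dots> \<le> (\<Sum>v\<in>?V. card (nb ?V E ` fam ?V E {v} {} (card ?V - 2)))"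
    by (rule card_UN_le) simp
  also have "\<dots> \<le> (\<Sum>v\<in>?V. card (fam ?V E {v} {} (card ?V - 2)))"
    by (intro sum_mono card_image_le fam_finite) simp
  finally have "real (card (minimal_separators ?V E)) \<le> real (\<Sum>v\<in>?V. card (fam ?V E {v} {} (n - 2)))"
    by (simp only: card_lessThan of_nat_le_iff)
  also have "\<dots> = (\<Sum>v\<in>?V. real (card (fam ?V E {v} {} (n - 2))))" by simp
  also have "\<dots> \<le> (\<Sum>v\<in>?V. golden_ratio ^ (n - 2))"
    by (intro sum_mono fam_bound) auto
  also have "\<dots> = real n * golden_ratio ^ (n - 2)" by simp
  also have "\<dots> \<le> real n * golden_ratio ^ n"
    using gr_ge1 by (intro mult_left_mono power_increasing) auto
  finally show "real (card (minimal_separators ?V E)) \<le> 1 * golden_ratio ^ n * real n"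
    by (simp add: mult.commute)
qed (simp)

end
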